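(* Let $\Bbbk$ be a field, $H$ a Hopf $\Bbbk$-algebra with bijective antipode, and $A$ a left $H$-module $\Bbbk$-algebra. For $q\in\operatorname{Q} A$ let $D_q=\{ a \in A \mid qAa \subseteq A \text{ and } aAq \subseteq A \}$, and define \[ \operatorname{Q}^H A = \{ q \in \operatorname{Q} A \mid h.(dq) = (h.d)q \text{ and } h.(qd) = q(h.d) \text{ for all } h \in H,\ d \in D_q \}. \] Let $\mathscr{E}^H$ be the set of two-sided ideals of $A$ that are $H$-submodules and have zero left and right annihilator in $A$. Then: (a) $D_q \in \mathscr{E}^H$ for every $q \in \operatorname{Q}^H A$. (b) Let $q \in \operatorname{Q} A$. If there is some $I \in \mathscr{E}^H$ with $I \subseteq D_q$ such that $h.(aq) = (h.a)q$ and $h.(qa) = q(h.a)$ for all $h \in H$ and $a \in I$, then $q \in \operatorname{Q}^H A$. (c) $\operatorname{Q}^H A$ is a subalgebra of $\operatorname{Q} A$, and $A^H \subseteq \operatorname{Q}^H A$, where $A^H=\{a\in A \mid h.a=\varepsilon(h)a \ \forall h\in H\}$.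
   Context: A left $H$-module algebra is a $\Bbbk$-algebra $A$ with $1$ that is a left $H$-module via $h\otimes a\mapsto h.a$ such that $h.(ab)=(h_1.a)(h_2.b)$ (Sweedler notation $\Delta h=h_1\otimes h_2$) and $h.1=\varepsilon(h)1$, where $\varepsilon$ is the counit of $H$. $\operatorname{Q} A$ denotes the symmetric (Martindale) ring of quotients of $A$; $A$ is a subring of $\operatorname{Q} A$, and for $q \in \operatorname{Q} A$ the set $D_q$ is a two-sided ideal of $A$ with zero left and right annihilator. *)

theory Defs
  imports Complex_Main
begin

text \<open>Elements of H (x) H and H (x) H (x) H are represented by finite lists of
pairs/triples (finite sums of simple tensors).  Over a field, two such tensors
are equal iff they agree under all products of linear functionals.\<close>

definition teq2 :: "('k::field \<Rightarrow> 'h::ab_group_add \<Rightarrow> 'h) \<Rightarrow> ('h \<times> 'h) list \<Rightarrow> ('h \<times> 'h) list \<Rightarrow> bool" where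
  "teq2 s xs ys \<longleftrightarrow>
     (\<forall>f g :: 'h \<Rightarrow> 'k. Vector_Spaces.linear s (*) f \<and> Vector_Spaces.linear s (*) g \<longrightarrow>
        sum_list (map (\<lambda>(x,y). f x * g y) xs) = sum_list (map (\<lambda>(x,y). f x * g y) ys))"

definition teq3 :: "('k::field \<Rightarrow> 'h::ab_group_add \<Rightarrow> 'h) \<Rightarrow> ('h \<times> 'h \<times> 'h) list \<Rightarrow> ('h \<times> 'h \<times> 'h) list \<Rightarrow> bool" where
  "teq3 s xs ys \<longleftrightarrow>
     (\<forall>f g u :: 'h \<Rightarrow> 'k. Vector_Spaces.linear s (*) f \<and> Vector_Spaces.linear s (*) g
          \<and> Vector_Spaces.linear s (*) u \<longrightarrow>
        sum_list (map (\<lambda>(x,y,z). f x * g y * u z) xs) = sum_list (map (\<lambda>(x,y,z). f x * g y * u z) ys))"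

locale k_algebra = vector_space sc for sc :: "'k::field \<Rightarrow> 'a::ring_1 \<Rightarrow> 'a" +
  assumes scale_mult_left: "sc c (x * y) = sc c x * y"
    and scale_mult_right: "sc c (x * y) = x * sc c y"

locale hopf_algebra = k_algebra sH for sH :: "'k::field \<Rightarrow> 'h::ring_1 \<Rightarrow> 'h" +
  fixes Delta :: "'h \<Rightarrow> ('h \<times> 'h) list" and eps :: "'h \<Rightarrow> 'k" and S :: "'h \<Rightarrow> 'h"
  assumes comult_add: "teq2 sH (Delta (x + y)) (Delta x @ Delta y)"
    and comult_scale: "teq2 sH (Delta (sH c x)) (map (\<lambda>(a,b). (sH c a, b)) (Delta x))"
    and comult_mult: "teq2 sH (Delta (x * y))
          (concat (map (\<lambda>(a,b). map (\<lambda>(a',b'). (a * a', b * b')) (Delta y)) (Delta x)))"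
    and comult_one: "teq2 sH (Delta 1) [(1, 1)]"
    and coassoc: "teq3 sH
          (concat (map (\<lambda>(a,b). map (\<lambda>(a1,a2). (a1, a2, b)) (Delta a)) (Delta x)))
          (concat (map (\<lambda>(a,b). map (\<lambda>(b1,b2). (a, b1, b2)) (Delta b)) (Delta x)))"
    and counit_linear: "Vector_Spaces.linear sH (*) eps"
    and counit_mult: "eps (x * y) = eps x * eps y"
    and counit_one: "eps 1 = 1"
    and counit_left: "sum_list (map (\<lambda>(a,b). sH (eps a) b) (Delta x)) = x"
    and counit_right: "sum_list (map (\<lambda>(a,b). sH (eps b) a) (Delta x)) = x"
    and antipode_linear: "Vector_Spaces.linear sH sH S"
    and antipode_left: "sum_list (map (\<lambda>(a,b). S a * b) (Delta x)) = sH (eps x) 1"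
    and antipode_right: "sum_list (map (\<lambda>(a,b). a * S b) (Delta x)) = sH (eps x) 1"

locale H_module_algebra = hopf_algebra sH Delta eps S + A: k_algebra sA
  for sH :: "'k::field \<Rightarrow> 'h::ring_1 \<Rightarrow> 'h" and Delta eps S
    and sA :: "'k \<Rightarrow> 'a::ring_1 \<Rightarrow> 'a" +
  fixes act :: "'h \<Rightarrow> 'a \<Rightarrow> 'a"
  assumes act_linear_right: "Vector_Spaces.linear sA sA (act h)"
    and act_linear_left: "Vector_Spaces.linear sH sA (\<lambda>h. act h a)"
    and act_one: "act 1 a = a"
    and act_mult: "act (h * g) a = act h (act g a)"
    and act_prod: "act h (a * b) = sum_list (map (\<lambda>(x,y). act x a * act y b) (Delta h))"
    and act_unit: "act h 1 = sA (eps h) 1"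

definition ring_ideal :: "'a::ring_1 set \<Rightarrow> bool" where
  "ring_ideal I \<longleftrightarrow> 0 \<in> I \<and> (\<forall>x\<in>I. \<forall>y\<in>I. x + y \<in> I) \<and> (\<forall>x\<in>I. - x \<in> I)
     \<and> (\<forall>x\<in>I. \<forall>a. a * x \<in> I \<and> x * a \<in> I)"

definition dense_ideals :: "'a::ring_1 set set" where
  "dense_ideals = {I. ring_ideal I
      \<and> (\<forall>a. (\<forall>x\<in>I. a * x = 0) \<longrightarrow> a = 0)
      \<and> (\<forall>a. (\<forall>x\<in>I. x * a = 0) \<longrightarrow> a = 0)}"

text \<open>\<open>Q\<close> (with embedding \<open>iota\<close>) is the symmetric Martindale ring of quotients of the
ring \<open>A\<close> (standard characterization, unique up to unique isomorphism over A).\<close>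
definition sym_martindale :: "('a::ring_1 \<Rightarrow> 'q::ring_1) \<Rightarrow> bool" where
  "sym_martindale iota \<longleftrightarrow>
     inj iota \<and> iota 1 = 1 \<and> (\<forall>a b. iota (a + b) = iota a + iota b)
     \<and> (\<forall>a b. iota (a * b) = iota a * iota b)
     \<and> (\<forall>q. \<exists>I\<in>dense_ideals. (\<forall>x\<in>I. q * iota x \<in> range iota \<and> iota x * q \<in> range iota))
     \<and> (\<forall>q. \<forall>I\<in>dense_ideals. (\<forall>x\<in>I. q * iota x = 0) \<or> (\<forall>x\<in>I. iota x * q = 0) \<longrightarrow> q = 0)
     \<and> (\<forall>I\<in>dense_ideals. \<forall>f g.
          (\<forall>x\<in>I. \<forall>y\<in>I. f (x + y) = f x + f y \<and> g (x + y) = g x + g y)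
          \<and> (\<forall>x\<in>I. \<forall>a. f (x * a) = f x * a \<and> g (a * x) = a * g x)
          \<and> (\<forall>x\<in>I. \<forall>y\<in>I. x * f y = g x * y)
          \<longrightarrow> (\<exists>q. \<forall>x\<in>I. q * iota x = iota (f x) \<and> iota x * q = iota (g x)))"

definition Dq :: "('a::ring_1 \<Rightarrow> 'q::ring_1) \<Rightarrow> 'q \<Rightarrow> 'a set" where
  "Dq iota q = {a. \<forall>b. q * iota b * iota a \<in> range iota \<and> iota a * iota b * q \<in> range iota}"

definition QH :: "('h \<Rightarrow> 'a \<Rightarrow> 'a) \<Rightarrow> ('a::ring_1 \<Rightarrow> 'q::ring_1) \<Rightarrow> 'q set" where
  "QH act iota = {q. \<forall>h. \<forall>d\<in>Dq iota q.
      (\<forall>a. iota a = iota d * q \<longrightarrow> iota (act h a) = iota (act h d) * q)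
    \<and> (\<forall>a. iota a = q * iota d \<longrightarrow> iota (act h a) = q * iota (act h d))}"

text \<open>\<open>E^H\<close>: two-sided ideals that are H-submodules with zero left/right annihilator.
(Ideals of a unital k-algebra are automatically k-subspaces.)\<close>
definition EH :: "('h \<Rightarrow> 'a \<Rightarrow> 'a) \<Rightarrow> 'a::ring_1 set set" where
  "EH act = {I \<in> dense_ideals. \<forall>h. \<forall>x\<in>I. act h x \<in> I}"

definition invariants :: "('h \<Rightarrow> 'a \<Rightarrow> 'a) \<Rightarrow> ('h \<Rightarrow> 'k) \<Rightarrow> ('k \<Rightarrow> 'a \<Rightarrow> 'a) \<Rightarrow> 'a set" where
  "invariants act eps sA = {a. \<forall>h. act h a = sA (eps h) a}"

text \<open>k-subalgebra of Q; the k-structure of Q is \<open>c \<cdot> q = iota (c \<cdot> 1) * q\<close>.\<close>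
definition subalgebra_Q :: "('k \<Rightarrow> 'a \<Rightarrow> 'a) \<Rightarrow> ('a::ring_1 \<Rightarrow> 'q::ring_1) \<Rightarrow> 'q set \<Rightarrow> bool" where
  "subalgebra_Q sA iota B \<longleftrightarrow> 0 \<in> B \<and> 1 \<in> B \<and> (\<forall>x\<in>B. \<forall>y\<in>B. x + y \<in> B \<and> x * y \<in> B)
     \<and> (\<forall>x\<in>B. - x \<in> B) \<and> (\<forall>c. \<forall>x\<in>B. iota (sA c 1) * x \<in> B)"

end

theory Submission
  imports Defs
begin


lemma vs_field: "vector_space ((*) :: 'k::field \<Rightarrow> 'k \<Rightarrow> 'k)"
  by (unfold_locales) (auto simp: algebra_simps)

lemma lin_add: "Vector_Spaces.linear s1 s2 f \<Longrightarrow> f (x + y) = f x + f y"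
  by (simp add: Vector_Spaces.linear_iff)
lemma lin_scale: "Vector_Spaces.linear s1 s2 f \<Longrightarrow> f (s1 c x) = s2 c (f x)"
  by (simp add: Vector_Spaces.linear_iff)
lemma lin_zero: "Vector_Spaces.linear s1 s2 f \<Longrightarrow> f 0 = 0"
  by (metis add_cancel_right_right lin_add add_0)
lemma lin_sum: "Vector_Spaces.linear s1 s2 f \<Longrightarrow> f (\<Sum>e\<in>E. g e) = (\<Sum>e\<in>E. f (g e))"
  by (induction E rule: infinite_finite_induct) (auto simp: lin_zero lin_add)
lemma lin_sum_list: "Vector_Spaces.linear s1 s2 f \<Longrightarrow> f (sum_list (map g xs)) = sum_list (map (\<lambda>x. f (g x)) xs)"
  by (induction xs) (auto simp: lin_zero lin_add)

lemma sum_list_sum_swap: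
  "sum_list (map (\<lambda>p. \<Sum>e\<in>E. g p e) xs) = (\<Sum>e\<in>E. sum_list (map (\<lambda>p. g p e) xs))"
  by (induction xs) (auto simp: sum.distrib)

lemma sum_list_scale:
  assumes "vector_space s"
  shows "sum_list (map (\<lambda>p. s (c p) v) xs) = s (sum_list (map c xs)) v"
proof -
  interpret vector_space s by fact
  show ?thesis by (induction xs) (auto simp: scale_left_distrib)
qed

lemma dual_coords:
  fixes s :: "'k::field \<Rightarrow> 'h::ab_group_add \<Rightarrow> 'h"
  assumes vs: "vector_space s" and fin: "finite C"
  shows "\<exists>Bs f. finite Bs \<and> (\<forall>e\<in>Bs. Vector_Spaces.linear s (*) (f e))
            \<and> (\<forall>x\<in>C. x = (\<Sum>e\<in>Bs. s (f e x) e))"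
proof -
  interpret vector_space s by fact
  interpret p: vector_space_pair s "(*) :: 'k \<Rightarrow> 'k \<Rightarrow> 'k"
    using vs vs_field by (simp add: vector_space_pair_def)
  obtain Bs where Bs: "Bs \<subseteq> C" "independent Bs" "C \<subseteq> span Bs"
    using maximal_independent_subset by blast
  have finB: "finite Bs" using Bs(1) fin finite_subset by blast
  have "\<forall>e. \<exists>g. e \<in> Bs \<longrightarrow> Vector_Spaces.linear s (*) g \<and> (\<forall>x\<in>Bs. g x = (if x = e then 1 else 0))"
    using p.linear_independent_extend[OF Bs(2), of "\<lambda>x. if x = e then 1 else 0" for e] by blast
  then obtain f where f: "\<And>e. e \<in> Bs \<Longrightarrow> Vector_Spaces.linear s (*) (f e)"
    "\<And>e x. e \<in> Bs \<Longrightarrow> x \<in> Bs \<Longrightarrow> f e x = (if x = e then 1 else 0)"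
    by metis
  have "x = (\<Sum>e\<in>Bs. s (f e x) e)" if "x \<in> C" for x
  proof -
    have "x \<in> span Bs" using that Bs(3) by blast
    then obtain u where u: "x = (\<Sum>v\<in>Bs. s (u v) v)"
      using span_finite[OF finB] by blast
    have "f e x = u e" if "e \<in> Bs" for e
    proof -
      have "f e x = (\<Sum>v\<in>Bs. u v * f e v)"
        unfolding u using f(1)[OF that] by (simp add: lin_sum lin_scale)
      also have "\<dots> = (\<Sum>v\<in>Bs. if v = e then u v else 0)"
        by (rule sum.cong) (auto simp: f(2)[OF that])
      also have "\<dots> = u e" using that finB by (simp add: sum.delta)
      finally show ?thesis .
    qed
    then show ?thesis using u by (metis (no_types, lifting) sum.cong)
  qed
  then show ?thesis using finB f(1) by blast
qed

lemma teq2_transfer: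
  fixes sH :: "'k::field \<Rightarrow> 'h::ab_group_add \<Rightarrow> 'h" and sV :: "'k \<Rightarrow> 'v::ab_group_add \<Rightarrow> 'v"
  assumes vsH: "vector_space sH" and vsV: "vector_space sV" and eq: "teq2 sH xs ys"
    and lin1: "\<And>y. Vector_Spaces.linear sH sV (\<lambda>x. B x y)"
    and lin2: "\<And>x. Vector_Spaces.linear sH sV (B x)"
  shows "sum_list (map (\<lambda>(x,y). B x y) xs) = sum_list (map (\<lambda>(x,y). B x y) ys)"
proof -
  interpret V: vector_space sV by fact
  define C where "C = fst ` set xs \<union> snd ` set xs \<union> fst ` set ys \<union> snd ` set ys"
  have "finite C" unfolding C_def by auto
  then obtain Bs f where fB: "finite Bs" and fl: "\<And>e. e\<in>Bs \<Longrightarrow> Vector_Spaces.linear sH (*) (f e)"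
    and fx: "\<And>x. x\<in>C \<Longrightarrow> x = (\<Sum>e\<in>Bs. sH (f e x) e)"
    using dual_coords[OF vsH] by metis
  have exp: "B x y = (\<Sum>e\<in>Bs. \<Sum>e'\<in>Bs. sV (f e x * f e' y) (B e e'))" if "x \<in> C" "y \<in> C" for x y
  proof -
    have "B x y = (\<Sum>e\<in>Bs. sV (f e x) (B e y))"
      by (subst fx[OF that(1)]) (simp add: lin_sum[OF lin1] lin_scale[OF lin1])
    also have "\<dots> = (\<Sum>e\<in>Bs. sV (f e x) (\<Sum>e'\<in>Bs. sV (f e' y) (B e e')))"
      by (subst fx[OF that(2)]) (simp add: lin_sum[OF lin2] lin_scale[OF lin2])
    also have "\<dots> = (\<Sum>e\<in>Bs. \<Sum>e'\<in>Bs. sV (f e x * f e' y) (B e e'))"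
      by (simp add: V.scale_sum_right mult.commute)
    finally show ?thesis .
  qed
  have gen: "sum_list (map (\<lambda>(x,y). B x y) L) =
     (\<Sum>e\<in>Bs. \<Sum>e'\<in>Bs. sV (sum_list (map (\<lambda>(x,y). f e x * f e' y) L)) (B e e'))"
    if "\<forall>p\<in>set L. fst p \<in> C \<and> snd p \<in> C" for L
  proof -
    have "sum_list (map (\<lambda>(x,y). B x y) L) =
        sum_list (map (\<lambda>p. \<Sum>e\<in>Bs. \<Sum>e'\<in>Bs. sV (f e (fst p) * f e' (snd p)) (B e e')) L)"
      using that by (intro arg_cong[where f=sum_list] map_cong) (auto simp: exp)
    also have "\<dots> = (\<Sum>e\<in>Bs. \<Sum>e'\<in>Bs. sum_list (map (\<lambda>p. sV (f e (fst p) * f e' (snd p)) (B e e')) L))"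
      by (simp add: sum_list_sum_swap)
    also have "\<dots> = (\<Sum>e\<in>Bs. \<Sum>e'\<in>Bs. sV (sum_list (map (\<lambda>(x,y). f e x * f e' y) L)) (B e e'))"
      by (simp add: sum_list_scale[OF vsV] split_def)
    finally show ?thesis .
  qed
  have "sum_list (map (\<lambda>(x,y). f e x * f e' y) xs) = sum_list (map (\<lambda>(x,y). f e x * f e' y) ys)"
    if "e \<in> Bs" "e' \<in> Bs" for e e'
    using eq fl[OF that(1)] fl[OF that(2)] unfolding teq2_def by blast
  moreover have "\<forall>p\<in>set xs. fst p \<in> C \<and> snd p \<in> C" "\<forall>p\<in>set ys. fst p \<in> C \<and> snd p \<in> C"
    unfolding C_def by auto
  ultimately show ?thesis
    by (simp only: gen) (intro sum.cong refl; simp)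
qed

lemma teq3_transfer:
  fixes sH :: "'k::field \<Rightarrow> 'h::ab_group_add \<Rightarrow> 'h" and sV :: "'k \<Rightarrow> 'v::ab_group_add \<Rightarrow> 'v"
  assumes vsH: "vector_space sH" and vsV: "vector_space sV" and eq: "teq3 sH xs ys"
    and lin1: "\<And>y z. Vector_Spaces.linear sH sV (\<lambda>x. B x y z)"
    and lin2: "\<And>x z. Vector_Spaces.linear sH sV (\<lambda>y. B x y z)"
    and lin3: "\<And>x y. Vector_Spaces.linear sH sV (B x y)"
  shows "sum_list (map (\<lambda>(x,y,z). B x y z) xs) = sum_list (map (\<lambda>(x,y,z). B x y z) ys)"
proof -
  interpret V: vector_space sV by fact
  define C where "C = fst ` set xs \<union> fst ` snd ` set xs \<union> snd ` snd ` set xs \<union>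
     fst ` set ys \<union> fst ` snd ` set ys \<union> snd ` snd ` set ys"
  have "finite C" unfolding C_def by auto
  then obtain Bs f where fB: "finite Bs" and fl: "\<And>e. e\<in>Bs \<Longrightarrow> Vector_Spaces.linear sH (*) (f e)"
    and fx: "\<And>x. x\<in>C \<Longrightarrow> x = (\<Sum>e\<in>Bs. sH (f e x) e)"
    using dual_coords[OF vsH] by metis
  have exp: "B x y z = (\<Sum>e\<in>Bs. \<Sum>e'\<in>Bs. \<Sum>e''\<in>Bs. sV (f e x * f e' y * f e'' z) (B e e' e''))"
    if "x \<in> C" "y \<in> C" "z \<in> C" for x y z
  proof -
    have "B x y z = (\<Sum>e\<in>Bs. sV (f e x) (B e y z))"
      by (subst fx[OF that(1)]) (simp add: lin_sum[OF lin1] lin_scale[OF lin1])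
    also have "\<dots> = (\<Sum>e\<in>Bs. sV (f e x) (\<Sum>e'\<in>Bs. sV (f e' y) (B e e' z)))"
      by (subst fx[OF that(2)]) (simp add: lin_sum[OF lin2] lin_scale[OF lin2])
    also have "\<dots> = (\<Sum>e\<in>Bs. sV (f e x) (\<Sum>e'\<in>Bs. sV (f e' y) (\<Sum>e''\<in>Bs. sV (f e'' z) (B e e' e''))))"
      by (subst fx[OF that(3)]) (simp add: lin_sum[OF lin3] lin_scale[OF lin3])
    also have "\<dots> = (\<Sum>e\<in>Bs. \<Sum>e'\<in>Bs. \<Sum>e''\<in>Bs. sV (f e x * f e' y * f e'' z) (B e e' e''))"
      by (simp add: V.scale_sum_right mult.commute mult.left_commute)
    finally show ?thesis .
  qed
  have gen: "sum_list (map (\<lambda>(x,y,z). B x y z) L) =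
     (\<Sum>e\<in>Bs. \<Sum>e'\<in>Bs. \<Sum>e''\<in>Bs. sV (sum_list (map (\<lambda>(x,y,z). f e x * f e' y * f e'' z) L)) (B e e' e''))"
    if "\<forall>p\<in>set L. fst p \<in> C \<and> fst (snd p) \<in> C \<and> snd (snd p) \<in> C" for L
  proof -
    have "sum_list (map (\<lambda>(x,y,z). B x y z) L) =
        sum_list (map (\<lambda>p. \<Sum>e\<in>Bs. \<Sum>e'\<in>Bs. \<Sum>e''\<in>Bs. sV (f e (fst p) * f e' (fst (snd p)) * f e'' (snd (snd p))) (B e e' e'')) L)"
      using that by (intro arg_cong[where f=sum_list] map_cong) (auto simp: exp)
    also have "\<dots> = (\<Sum>e\<in>Bs. \<Sum>e'\<in>Bs. \<Sum>e''\<in>Bs. sum_list (map (\<lambda>p. sV (f e (fst p) * f e' (fst (snd p)) * f e'' (snd (snd p))) (B e e' e'')) L))"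
      by (simp add: sum_list_sum_swap)
    also have "\<dots> = (\<Sum>e\<in>Bs. \<Sum>e'\<in>Bs. \<Sum>e''\<in>Bs. sV (sum_list (map (\<lambda>(x,y,z). f e x * f e' y * f e'' z) L)) (B e e' e''))"
      by (simp add: sum_list_scale[OF vsV] split_def)
    finally show ?thesis .
  qed
  have "sum_list (map (\<lambda>(x,y,z). f e x * f e' y * f e'' z) xs) = sum_list (map (\<lambda>(x,y,z). f e x * f e' y * f e'' z) ys)"
    if "e \<in> Bs" "e' \<in> Bs" "e'' \<in> Bs" for e e' e''
    using eq fl[OF that(1)] fl[OF that(2)] fl[OF that(3)] unfolding teq3_def by blast
  moreover have "\<forall>p\<in>set xs. fst p \<in> C \<and> fst (snd p) \<in> C \<and> snd (snd p) \<in> C"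
     "\<forall>p\<in>set ys. fst p \<in> C \<and> fst (snd p) \<in> C \<and> snd (snd p) \<in> C"
    unfolding C_def by (auto simp: image_iff)
  ultimately show ?thesis
    by (simp only: gen) (intro sum.cong refl; simp)
qed




lemma linI:
  assumes "vector_space s1" "vector_space s2"
    "\<And>x y. f (x + y) = f x + f y" "\<And>c x. f (s1 c x) = s2 c (f x)"
  shows "Vector_Spaces.linear s1 s2 f"
  using assms by (simp add: Vector_Spaces.linear_iff)

lemma sum_list_swap:
  fixes f :: "'a \<Rightarrow> 'b \<Rightarrow> 'c::comm_monoid_add"
  shows "sum_list (map (\<lambda>a. sum_list (map (\<lambda>b. f a b) ys)) xs) =
   sum_list (map (\<lambda>b. sum_list (map (\<lambda>a. f a b) xs)) ys)"
  by (induction xs) (auto simp: sum_list_addf)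

lemma sum_L1: "sum_list (map (\<lambda>(p,q,r). F p q r) (concat (map (\<lambda>(a,b). map (\<lambda>(a1,a2). (a1,a2,b)) (G a)) xs)))
   = sum_list (map (\<lambda>(a,b). sum_list (map (\<lambda>(a1,a2). F a1 a2 b) (G a))) xs)"
  by (induction xs) (auto simp: map_concat split_def comp_def)

lemma sum_L2: "sum_list (map (\<lambda>(p,q,r). F p q r) (concat (map (\<lambda>(a,b). map (\<lambda>(b1,b2). (a,b1,b2)) (G b)) xs)))
   = sum_list (map (\<lambda>(a,b). sum_list (map (\<lambda>(b1,b2). F a b1 b2) (G b))) xs)"
  by (induction xs) (auto simp: map_concat split_def comp_def)

lemma sum_LM: "sum_list (map (\<lambda>(p,q). F p q) (concat (map (\<lambda>(a,b). map (\<lambda>(a',b'). (a * a', b * b')) ys) xs)))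
   = sum_list (map (\<lambda>(a,b). sum_list (map (\<lambda>(c,d). F (a*c) (b*d)) ys)) xs)"
  by (induction xs) (auto simp: map_concat split_def comp_def)

lemma prod_sums:
  fixes f :: "'b \<Rightarrow> 'a::semiring_0"
  shows "sum_list (map f xs) * sum_list (map g ys) = sum_list (map (\<lambda>x. sum_list (map (\<lambda>y. f x * g y) ys)) xs)"
  by (induction xs) (auto simp: distrib_right sum_list_const_mult)

context k_algebra
begin

lemma vs: "vector_space sc" by unfold_locales

lemma sc_sum_list: "sc c (sum_list (map f xs)) = sum_list (map (\<lambda>x. sc c (f x)) xs)"
  by (induction xs) (auto simp: scale_right_distrib)

lemma sc_sum_list_left: "sum_list (map (\<lambda>x. sc (g x) v) xs) = sc (sum_list (map g xs)) v"
  by (induction xs) (auto simp: scale_left_distrib)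

lemma sc_ml: "sc c x * y = sc c (x * y)" by (simp add: scale_mult_left)
lemma sc_mr: "x * sc c y = sc c (x * y)" by (simp add: scale_mult_right)

lemma lin_mult_left: "Vector_Spaces.linear sc sc (\<lambda>x. x * y)"
  by (rule linI[OF vs vs]) (auto simp: distrib_right sc_ml)
lemma lin_mult_right: "Vector_Spaces.linear sc sc (\<lambda>y. x * y)"
  by (rule linI[OF vs vs]) (auto simp: distrib_left sc_mr)

end

context hopf_algebra
begin

lemmas simpsH = sum_list_addf distrib_left distrib_right sc_ml sc_mr sc_sum_list split_def
   lin_add[OF antipode_linear] lin_scale[OF antipode_linear] lin_zero[OF antipode_linear]


lemma S_one: "S 1 = 1"
proof -
  have "sum_list (map (\<lambda>(a,b). S a * b) (Delta 1)) = sum_list (map (\<lambda>(a,b). S a * b) [(1,1)])"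
    by (rule teq2_transfer[OF vs vs comult_one])
      (rule linI[OF vs vs]; simp add: simpsH)+
  then show ?thesis using antipode_left[of 1] by (simp add: counit_one)
qed

lemma coassoc_sum:
  fixes sV :: "'k \<Rightarrow> 'v::ab_group_add \<Rightarrow> 'v"
  assumes vsV: "vector_space sV"
    and lin1: "\<And>y z. Vector_Spaces.linear sH sV (\<lambda>x. F x y z)"
    and lin2: "\<And>x z. Vector_Spaces.linear sH sV (\<lambda>y. F x y z)"
    and lin3: "\<And>x y. Vector_Spaces.linear sH sV (F x y)"
  shows "sum_list (map (\<lambda>(a,b). sum_list (map (\<lambda>(a1,a2). F a1 a2 b) (Delta a))) (Delta x))
       = sum_list (map (\<lambda>(a,b). sum_list (map (\<lambda>(b1,b2). F a b1 b2) (Delta b))) (Delta x))"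
proof -
  have "sum_list (map (\<lambda>(p,q,r). F p q r) (concat (map (\<lambda>(a,b). map (\<lambda>(a1,a2). (a1,a2,b)) (Delta a)) (Delta x))))
   = sum_list (map (\<lambda>(p,q,r). F p q r) (concat (map (\<lambda>(a,b). map (\<lambda>(b1,b2). (a,b1,b2)) (Delta b)) (Delta x))))"
    by (rule teq3_transfer[OF vs vsV coassoc[of x]]) (fact lin1 lin2 lin3)+
  then show ?thesis unfolding sum_L1 sum_L2 .
qed

lemma comult_mult_sum:
  fixes sV :: "'k \<Rightarrow> 'v::ab_group_add \<Rightarrow> 'v"
  assumes vsV: "vector_space sV"
    and lin1: "\<And>y. Vector_Spaces.linear sH sV (\<lambda>x. F x y)"
    and lin2: "\<And>x. Vector_Spaces.linear sH sV (F x)"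
  shows "sum_list (map (\<lambda>(a,b). sum_list (map (\<lambda>(c,d). F (a*c) (b*d)) (Delta y))) (Delta x))
       = sum_list (map (\<lambda>(a,b). F a b) (Delta (x*y)))"
proof -
  have "sum_list (map (\<lambda>(p,q). F p q) (Delta (x*y))) = sum_list (map (\<lambda>(p,q). F p q) (concat (map (\<lambda>(a,b). map (\<lambda>(a',b'). (a * a', b * b')) (Delta y)) (Delta x))))"
    by (rule teq2_transfer[OF vs vsV comult_mult[of x y]]) (fact lin1 lin2)+
  then show ?thesis unfolding sum_LM by simp
qed


lemma S_antimult: "S (x * y) = S y * S x"
proof -
  have E0: "S (x*y) = sum_list (map (\<lambda>(a,b). sum_list (map (\<lambda>(c,d). S (a*c) * sH (eps b * eps d) 1) (Delta y))) (Delta x))"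
  proof -
    have "x*y = sum_list (map (\<lambda>(a,b). sH (eps b) a) (Delta x)) * sum_list (map (\<lambda>(c,d). sH (eps d) c) (Delta y))"
      by (simp add: counit_right)
    also have "\<dots> = sum_list (map (\<lambda>(a,b). sum_list (map (\<lambda>(c,d). sH (eps b * eps d) (a*c)) (Delta y))) (Delta x))"
      unfolding split_def by (subst prod_sums) (simp add: sc_ml sc_mr scale_scale mult.commute)
    finally have "S (x*y) = sum_list (map (\<lambda>(a,b). sum_list (map (\<lambda>(c,d). S (sH (eps b * eps d) (a*c))) (Delta y))) (Delta x))"
      by (simp add: lin_sum_list[OF antipode_linear] split_def)
    then show ?thesis by (simp add: lin_scale[OF antipode_linear] sc_mr split_def)
  qed
  have E1: "sH (eps b * eps d) 1 = sum_list (map (\<lambda>(b1,b2). sum_list (map (\<lambda>(d1,d2). b1 * d1 * S d2 * S b2) (Delta d))) (Delta b))" for b d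
  proof -
    have "sum_list (map (\<lambda>(b1,b2). sum_list (map (\<lambda>(d1,d2). b1 * d1 * S d2 * S b2) (Delta d))) (Delta b))
       = sum_list (map (\<lambda>(b1,b2). b1 * sum_list (map (\<lambda>(d1,d2). d1 * S d2) (Delta d)) * S b2) (Delta b))"
      by (simp add: sum_list_mult_const[symmetric] sum_list_const_mult[symmetric] split_def mult.assoc)
    also have "\<dots> = sum_list (map (\<lambda>(b1,b2). b1 * sH (eps d) 1 * S b2) (Delta b))"
      by (simp add: antipode_right)
    also have "\<dots> = sH (eps d) (sum_list (map (\<lambda>(b1,b2). b1 * S b2) (Delta b)))"
      by (simp add: sc_ml sc_mr sc_sum_list split_def)
    also have "\<dots> = sH (eps b * eps d) 1"
      by (simp add: antipode_right scale_scale mult.commute)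
    finally show ?thesis by simp
  qed
  define P1 where "P1 a b1 b2 = sum_list (map (\<lambda>(c,d). sum_list (map (\<lambda>(d1,d2). S (a*c) * (b1 * d1 * S d2 * S b2)) (Delta d))) (Delta y))" for a b1 b2
  have E2: "S (x*y) = sum_list (map (\<lambda>(a,b). sum_list (map (\<lambda>(b1,b2). P1 a b1 b2) (Delta b))) (Delta x))"
  proof -
    have "S (x*y) = sum_list (map (\<lambda>(a,b). sum_list (map (\<lambda>(c,d). sum_list (map (\<lambda>(b1,b2). sum_list (map (\<lambda>(d1,d2). S (a*c) * (b1 * d1 * S d2 * S b2)) (Delta d))) (Delta b))) (Delta y))) (Delta x))"
      unfolding E0 E1 by (simp add: sum_list_const_mult[symmetric] split_def)
    also have "\<dots> = sum_list (map (\<lambda>(a,b). sum_list (map (\<lambda>(b1,b2). sum_list (map (\<lambda>(c,d). sum_list (map (\<lambda>(d1,d2). S (a*c) * (b1 * d1 * S d2 * S b2)) (Delta d))) (Delta y))) (Delta b))) (Delta x))"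
      unfolding split_def by (subst sum_list_swap) (rule refl)
    finally show ?thesis unfolding P1_def .
  qed
  have E3: "S (x*y) = sum_list (map (\<lambda>(a,b). sum_list (map (\<lambda>(a1,a2). P1 a1 a2 b) (Delta a))) (Delta x))"
    unfolding E2
    by (rule coassoc_sum[OF vs, symmetric]; rule linI[OF vs vs]; simp add: P1_def simpsH)
  define P2 where "P2 a1 a2 b p q r = S (a1*p) * (a2 * q * S r * S b)" for a1 a2 b p q r
  have E4: "P1 a1 a2 b = sum_list (map (\<lambda>(c,d). sum_list (map (\<lambda>(c1,c2). P2 a1 a2 b c1 c2 d) (Delta c))) (Delta y))" for a1 a2 b
  proof -
    have "P1 a1 a2 b = sum_list (map (\<lambda>(c,d). sum_list (map (\<lambda>(d1,d2). P2 a1 a2 b c d1 d2) (Delta d))) (Delta y))"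
      unfolding P1_def P2_def ..
    also have "\<dots> = sum_list (map (\<lambda>(c,d). sum_list (map (\<lambda>(c1,c2). P2 a1 a2 b c1 c2 d) (Delta c))) (Delta y))"
      by (rule coassoc_sum[OF vs, symmetric]; rule linI[OF vs vs]; simp add: P2_def simpsH)
    finally show ?thesis .
  qed
  have E6: "sum_list (map (\<lambda>(a1,a2). sum_list (map (\<lambda>(c1,c2). S (a1*c1) * (a2*c2)) (Delta c))) (Delta a))
      = sH (eps a * eps c) 1" for a c
  proof -
    have "sum_list (map (\<lambda>(a1,a2). sum_list (map (\<lambda>(c1,c2). S (a1*c1) * (a2*c2)) (Delta c))) (Delta a))
       = sum_list (map (\<lambda>(p,q). S p * q) (Delta (a*c)))"
      by (rule comult_mult_sum[OF vs]; rule linI[OF vs vs]; simp add: simpsH)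
    also have "\<dots> = sH (eps a * eps c) 1" by (simp add: antipode_left counit_mult)
    finally show ?thesis .
  qed
  have E5: "S (x*y) = sum_list (map (\<lambda>(a,b). sum_list (map (\<lambda>(c,d).
        sum_list (map (\<lambda>(a1,a2). sum_list (map (\<lambda>(c1,c2). S (a1*c1) * (a2*c2)) (Delta c))) (Delta a)) * (S d * S b)) (Delta y))) (Delta x))"
  proof -
    have "S (x*y) = sum_list (map (\<lambda>(a,b). sum_list (map (\<lambda>(a1,a2). sum_list (map (\<lambda>(c,d). sum_list (map (\<lambda>(c1,c2). P2 a1 a2 b c1 c2 d) (Delta c))) (Delta y))) (Delta a))) (Delta x))"
      unfolding E3 E4 ..
    also have "\<dots> = sum_list (map (\<lambda>(a,b). sum_list (map (\<lambda>(c,d). sum_list (map (\<lambda>(a1,a2). sum_list (map (\<lambda>(c1,c2). P2 a1 a2 b c1 c2 d) (Delta c))) (Delta a))) (Delta y))) (Delta x))"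
      unfolding split_def by (subst sum_list_swap) (rule refl)
    finally show ?thesis unfolding P2_def
      by (simp add: sum_list_mult_const[symmetric] split_def mult.assoc)
  qed
  have "S y * S x = S (sum_list (map (\<lambda>(c,d). sH (eps c) d) (Delta y))) * S (sum_list (map (\<lambda>(a,b). sH (eps a) b) (Delta x)))"
    by (simp add: counit_left)
  also have "\<dots> = sum_list (map (\<lambda>(c,d). sH (eps c) (S d)) (Delta y)) * sum_list (map (\<lambda>(a,b). sH (eps a) (S b)) (Delta x))"
    by (simp add: lin_sum_list[OF antipode_linear] lin_scale[OF antipode_linear] split_def)
  also have "\<dots> = sum_list (map (\<lambda>(c,d). sum_list (map (\<lambda>(a,b). sH (eps c) (S d) * sH (eps a) (S b)) (Delta x))) (Delta y))"
    unfolding split_def by (rule prod_sums)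
  also have "\<dots> = sum_list (map (\<lambda>(a,b). sum_list (map (\<lambda>(c,d). sH (eps c) (S d) * sH (eps a) (S b)) (Delta y))) (Delta x))"
    unfolding split_def by (subst sum_list_swap) (rule refl)
  also have "\<dots> = S (x*y)"
    unfolding E5 E6 by (simp add: sc_ml sc_mr scale_scale mult.commute split_def)
  finally show ?thesis ..
qed

lemma S_surj: "bij S \<Longrightarrow> S (inv S a) = a"
  by (simp add: bij_is_surj surj_f_inv_f)
lemma S_injD: "bij S \<Longrightarrow> S a = S b \<Longrightarrow> a = b"
  by (simp add: bij_is_inj inj_eq)

lemma T_lin: assumes "bij S" shows "Vector_Spaces.linear sH sH (inv S)"
proof (rule linI[OF vs vs])
  fix x y show "inv S (x + y) = inv S x + inv S y"
    by (rule S_injD[OF assms]) (simp add: S_surj[OF assms] lin_add[OF antipode_linear])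
next
  fix c x show "inv S (sH c x) = sH c (inv S x)"
    by (rule S_injD[OF assms]) (simp add: S_surj[OF assms] lin_scale[OF antipode_linear])
qed

lemma T_conv: assumes "bij S" shows "sum_list (map (\<lambda>(a,b). b * inv S a) (Delta h)) = sH (eps h) 1"
proof (rule S_injD[OF assms])
  have "S (sum_list (map (\<lambda>(a,b). b * inv S a) (Delta h))) = sum_list (map (\<lambda>(a,b). a * S b) (Delta h))"
    by (simp add: lin_sum_list[OF antipode_linear] S_antimult S_surj[OF assms] split_def)
  then show "S (sum_list (map (\<lambda>(a,b). b * inv S a) (Delta h))) = S (sH (eps h) 1)"
    by (simp add: antipode_right lin_scale[OF antipode_linear] S_one)
qed

end

context H_module_algebra
begin

lemma act_add_left: "act (g + h) a = act g a + act h a"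
  using lin_add[OF act_linear_left] .
lemma act_scale_left: "act (sH c h) a = sA c (act h a)"
  using lin_scale[OF act_linear_left] .
lemma act_add_right: "act h (a + b) = act h a + act h b"
  using lin_add[OF act_linear_right] .
lemma act_scale_right: "act h (sA c a) = sA c (act h a)"
  using lin_scale[OF act_linear_right] .
lemma act_zero_right: "act h 0 = 0"
  using lin_zero[OF act_linear_right] .
lemma act_zero_left: "act 0 a = 0"
  using lin_zero[OF act_linear_left] .
lemma act_sum_list_left: "act (sum_list (map f xs)) a = sum_list (map (\<lambda>x. act (f x) a) xs)"
  using lin_sum_list[OF act_linear_left] .
lemma act_sum_list_right: "act h (sum_list (map f xs)) = sum_list (map (\<lambda>x. act h (f x)) xs)"
  using lin_sum_list[OF act_linear_right] .
lemma act_neg_right: "act h (- a) = - act h a"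
  by (metis act_add_right act_zero_right add_eq_0_iff)

lemmas simpsA = simpsH act_add_left act_scale_left act_add_right act_scale_right
  A.sc_ml A.sc_mr A.sc_sum_list

lemma id1: "act h a * x = sum_list (map (\<lambda>(u,w). act u (a * act (S w) x)) (Delta h))"
proof -
  have "sum_list (map (\<lambda>(u,w). act u (a * act (S w) x)) (Delta h))
     = sum_list (map (\<lambda>(u,w). sum_list (map (\<lambda>(c1,c2). act c1 a * act (c2 * S w) x) (Delta u))) (Delta h))"
    by (simp add: act_prod act_mult)
  also have "\<dots> = sum_list (map (\<lambda>(u,w). sum_list (map (\<lambda>(b1,b2). act u a * act (b1 * S b2) x) (Delta w))) (Delta h))"
    by (rule coassoc_sum[OF A.vs]; rule linI[OF vs A.vs]; simp add: simpsA)
  also have "\<dots> = sum_list (map (\<lambda>(u,w). act u a * act (sum_list (map (\<lambda>(b1,b2). b1 * S b2) (Delta w))) x) (Delta h))"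
    by (simp add: act_sum_list_left sum_list_const_mult split_def)
  also have "\<dots> = sum_list (map (\<lambda>(u,w). sA (eps w) (act u a) * x) (Delta h))"
    by (simp add: antipode_right act_scale_left act_one A.sc_ml A.sc_mr)
  also have "\<dots> = act h a * x"
    using counit_right[of h]
    by (simp add: sum_list_mult_const act_sum_list_left[symmetric] act_scale_left[symmetric] split_def)
  finally show ?thesis ..
qed

lemma id2: assumes "bij S"
  shows "x * act h a = sum_list (map (\<lambda>(u,w). act w (act (inv S u) x * a)) (Delta h))"
proof -
  have "sum_list (map (\<lambda>(u,w). act w (act (inv S u) x * a)) (Delta h))
     = sum_list (map (\<lambda>(u,w). sum_list (map (\<lambda>(b1,b2). act (b1 * inv S u) x * act b2 a) (Delta w))) (Delta h))"
    by (simp add: act_prod act_mult)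
  also have "\<dots> = sum_list (map (\<lambda>(u,w). sum_list (map (\<lambda>(c1,c2). act (c2 * inv S c1) x * act w a) (Delta u))) (Delta h))"
    by (rule coassoc_sum[OF A.vs, symmetric]; rule linI[OF vs A.vs];
        simp add: simpsA lin_add[OF T_lin[OF assms]] lin_scale[OF T_lin[OF assms]])
  also have "\<dots> = sum_list (map (\<lambda>(u,w). act (sum_list (map (\<lambda>(c1,c2). c2 * inv S c1) (Delta u))) x * act w a) (Delta h))"
    by (simp add: act_sum_list_left sum_list_mult_const split_def)
  also have "\<dots> = sum_list (map (\<lambda>(u,w). x * sA (eps u) (act w a)) (Delta h))"
    by (simp add: T_conv[OF assms] act_scale_left act_one A.sc_ml A.sc_mr)
  also have "\<dots> = x * act h a"
    using counit_left[of h]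
    by (simp add: sum_list_const_mult act_sum_list_left[symmetric] act_scale_left[symmetric] split_def)
  finally show ?thesis ..
qed

end

lemma ideal_sum_list: "ring_ideal I \<Longrightarrow> (\<And>x. x \<in> set xs \<Longrightarrow> f x \<in> I) \<Longrightarrow> sum_list (map f xs) \<in> I"
  by (induction xs) (auto simp: ring_ideal_def)

locale LS = H_module_algebra sH Delta eps S sA act
  for sH :: "'k::field \<Rightarrow> 'h::ring_1 \<Rightarrow> 'h" and Delta eps S
    and sA :: "'k \<Rightarrow> 'a::ring_1 \<Rightarrow> 'a" and act +
  fixes iota :: "'a \<Rightarrow> 'q::ring_1"
  assumes bijS: "bij S" and sm: "sym_martindale iota"
begin

lemmas smU = sm[unfolded sym_martindale_def]
lemma sm_inj: "inj iota" using smU by (rule conjunct1)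
lemma i_one: "iota 1 = 1" using smU[THEN conjunct2] by (rule conjunct1)
lemma sm_add: "\<forall>a b. iota (a + b) = iota a + iota b" using smU[THEN conjunct2, THEN conjunct2] by (rule conjunct1)
lemma sm_mult: "\<forall>a b. iota (a * b) = iota a * iota b" using smU[THEN conjunct2, THEN conjunct2, THEN conjunct2] by (rule conjunct1)
lemma sm_ex: "\<forall>q. \<exists>I\<in>dense_ideals. (\<forall>x\<in>I. q * iota x \<in> range iota \<and> iota x * q \<in> range iota)"
  using smU[THEN conjunct2, THEN conjunct2, THEN conjunct2, THEN conjunct2] by (rule conjunct1)
lemma sm_ann: "\<forall>q. \<forall>I\<in>dense_ideals. (\<forall>x\<in>I. q * iota x = 0) \<or> (\<forall>x\<in>I. iota x * q = 0) \<longrightarrow> q = 0"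
  using smU[THEN conjunct2, THEN conjunct2, THEN conjunct2, THEN conjunct2, THEN conjunct2] by (rule conjunct1)
lemma i_inj: "iota a = iota b \<longleftrightarrow> a = b" using sm_inj by (simp add: inj_eq)
lemma i_add: "iota (a + b) = iota a + iota b" using sm_add by simp
lemma i_mult: "iota (a * b) = iota a * iota b" using sm_mult by simp
lemma i_zero: "iota 0 = 0" by (metis add_cancel_right_right add_0 i_add)
lemma i_neg: "iota (- a) = - iota a" by (metis add.right_inverse add_eq_0_iff i_add i_zero)
lemma i_sum_list: "iota (sum_list (map f xs)) = sum_list (map (\<lambda>x. iota (f x)) xs)"
  by (induction xs) (auto simp: i_zero i_add)
lemma i_inv: "v \<in> range iota \<Longrightarrow> iota (inv iota v) = v"
  by (simp add: f_inv_into_f)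

lemma rng_sum_list: "(\<And>x. x \<in> set xs \<Longrightarrow> f x \<in> range iota) \<Longrightarrow> sum_list (map f xs) \<in> range iota"
proof (induction xs)
  case Nil then show ?case by (metis i_zero list.simps(8) rangeI sum_list.Nil)
next
  case (Cons a xs)
  then obtain u v where "f a = iota u" "sum_list (map f xs) = iota v" by fastforce
  then show ?case by (simp add: i_add[symmetric])
qed

lemma ann_right: "I \<in> dense_ideals \<Longrightarrow> (\<And>x. x \<in> I \<Longrightarrow> z * iota x = 0) \<Longrightarrow> z = 0"
  using sm_ann by blast
lemma ann_left: "I \<in> dense_ideals \<Longrightarrow> (\<And>x. x \<in> I \<Longrightarrow> iota x * z = 0) \<Longrightarrow> z = 0"
  using sm_ann by blast

lemma Dq_iff: "d \<in> Dq iota q \<longleftrightarrow> (\<forall>b. q * iota b * iota d \<in> range iota \<and> iota d * iota b * q \<in> range iota)"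
  unfolding Dq_def by simp

lemma Dq_left: "d \<in> Dq iota q \<Longrightarrow> q * iota d \<in> range iota"
  using Dq_iff[of d q] i_one by (metis mult.right_neutral)
lemma Dq_right: "d \<in> Dq iota q \<Longrightarrow> iota d * q \<in> range iota"
  using Dq_iff[of d q] i_one by (metis mult.right_neutral)

lemma Dq_ideal: "ring_ideal (Dq iota q)"
  unfolding ring_ideal_def
proof (intro conjI ballI allI)
  have "0 \<in> range iota" by (metis i_zero rangeI)
  then show "0 \<in> Dq iota q" unfolding Dq_iff by (simp add: i_zero)
next
  fix x y assume x: "x \<in> Dq iota q" and y: "y \<in> Dq iota q"
  show "x + y \<in> Dq iota q" unfolding Dq_iff
  proof
    fix b
    obtain u1 u2 v1 v2 where "q * iota b * iota x = iota u1" "iota x * iota b * q = iota v1"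
      "q * iota b * iota y = iota u2" "iota y * iota b * q = iota v2"
      using x y unfolding Dq_iff by (metis rangeE)
    then show "q * iota b * iota (x + y) \<in> range iota \<and> iota (x + y) * iota b * q \<in> range iota"
      by (metis i_add distrib_left distrib_right rangeI)
  qed
next
  fix x assume x: "x \<in> Dq iota q"
  show "- x \<in> Dq iota q" unfolding Dq_iff
  proof
    fix b
    obtain u1 v1 where "q * iota b * iota x = iota u1" "iota x * iota b * q = iota v1"
      using x unfolding Dq_iff by (metis rangeE)
    then show "q * iota b * iota (- x) \<in> range iota \<and> iota (- x) * iota b * q \<in> range iota"
      by (metis i_neg mult_minus_right mult_minus_left rangeI)
  qed
next
  fix x a assume x: "x \<in> Dq iota q"
  show "a * x \<in> Dq iota q" unfolding Dq_iff
  proof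
    fix b
    obtain u1 v1 where "q * iota (b * a) * iota x = iota u1" "iota x * iota b * q = iota v1"
      using x unfolding Dq_iff by (metis rangeE)
    then show "q * iota b * iota (a * x) \<in> range iota \<and> iota (a * x) * iota b * q \<in> range iota"
      by (metis i_mult mult.assoc rangeI)
  qed
  show "x * a \<in> Dq iota q" unfolding Dq_iff
  proof
    fix b
    obtain u1 v1 where "q * iota b * iota x = iota u1" "iota x * iota (a * b) * q = iota v1"
      using x unfolding Dq_iff by (metis rangeE)
    then show "q * iota b * iota (x * a) \<in> range iota \<and> iota (x * a) * iota b * q \<in> range iota"
      by (metis i_mult mult.assoc rangeI)
  qed
qed

lemma dense_sub: "I \<in> dense_ideals \<Longrightarrow> ring_ideal J \<Longrightarrow> I \<subseteq> J \<Longrightarrow> J \<in> dense_ideals"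
  unfolding dense_ideals_def by blast

lemma Dq_dense: "Dq iota q \<in> dense_ideals"
proof -
  obtain I where I: "I \<in> dense_ideals" "\<And>x. x \<in> I \<Longrightarrow> q * iota x \<in> range iota \<and> iota x * q \<in> range iota"
    using sm_ex by blast
  have "I \<subseteq> Dq iota q"
  proof
    fix x assume x: "x \<in> I"
    have "b * x \<in> I" "x * b \<in> I" for b using I(1) x unfolding dense_ideals_def ring_ideal_def by blast+
    then show "x \<in> Dq iota q" unfolding Dq_iff using I(2)
      by (metis i_mult mult.assoc)
  qed
  then show ?thesis using dense_sub[OF I(1) Dq_ideal] by blast
qed

lemma QH_iff: "q \<in> QH act iota \<longleftrightarrow> (\<forall>h. \<forall>d\<in>Dq iota q.
      (\<forall>a. iota a = iota d * q \<longrightarrow> iota (act h a) = iota (act h d) * q)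
    \<and> (\<forall>a. iota a = q * iota d \<longrightarrow> iota (act h a) = q * iota (act h d)))"
  unfolding QH_def by simp

lemma ideal_mult: "ring_ideal I \<Longrightarrow> x \<in> I \<Longrightarrow> a * x \<in> I \<and> x * a \<in> I"
  unfolding ring_ideal_def by blast

lemma Dq_stable:
  assumes q: "q \<in> QH act iota" and d: "d \<in> Dq iota q"
  shows "act h d \<in> Dq iota q"
  unfolding Dq_iff
proof
  fix b
  have r: "iota (act h d) * iota b * q \<in> range iota"
  proof -
    have "iota (act h d) * iota b * q = iota (act h d * b) * q" by (simp add: i_mult)
    also have "\<dots> = sum_list (map (\<lambda>(u,w). iota (act u (d * act (S w) b)) * q) (Delta h))"
      by (simp add: id1[of h d b] i_sum_list sum_list_mult_const split_def)
    also have "\<dots> \<in> range iota"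
    proof (rule rng_sum_list)
      fix p assume "p \<in> set (Delta h)"
      obtain u w where p: "p = (u,w)" by fastforce
      have e: "d * act (S w) b \<in> Dq iota q" using ideal_mult[OF Dq_ideal d] by blast
      obtain a where a: "iota a = iota (d * act (S w) b) * q" using Dq_right[OF e] by (metis rangeE)
      have "iota (act u a) = iota (act u (d * act (S w) b)) * q"
        using q e a unfolding QH_iff by blast
      then show "(\<lambda>(u,w). iota (act u (d * act (S w) b)) * q) p \<in> range iota"
        using p by (metis case_prod_conv rangeI)
    qed
    finally show ?thesis .
  qed
  have l: "q * iota b * iota (act h d) \<in> range iota"
  proof -
    have "q * iota b * iota (act h d) = q * iota (b * act h d)" by (simp add: i_mult mult.assoc)
    also have "\<dots> = sum_list (map (\<lambda>(u,w). q * iota (act w (act (inv S u) b * d))) (Delta h))"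
      by (simp add: id2[OF bijS, of b h d] i_sum_list sum_list_const_mult split_def)
    also have "\<dots> \<in> range iota"
    proof (rule rng_sum_list)
      fix p assume "p \<in> set (Delta h)"
      obtain u w where p: "p = (u,w)" by fastforce
      have e: "act (inv S u) b * d \<in> Dq iota q" using ideal_mult[OF Dq_ideal d] by blast
      obtain a where a: "iota a = q * iota (act (inv S u) b * d)" using Dq_left[OF e] by (metis rangeE)
      have "iota (act w a) = q * iota (act w (act (inv S u) b * d))"
        using q e a unfolding QH_iff by blast
      then show "(\<lambda>(u,w). q * iota (act w (act (inv S u) b * d))) p \<in> range iota"
        using p by (metis case_prod_conv rangeI)
    qed
    finally show ?thesis .
  qed
  show "q * iota b * iota (act h d) \<in> range iota \<and> iota (act h d) * iota b * q \<in> range iota"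
    using l r by blast
qed

lemma partA: "q \<in> QH act iota \<Longrightarrow> Dq iota q \<in> EH act"
  unfolding EH_def using Dq_dense Dq_stable by blast


lemma EH_D: "I \<in> EH act \<Longrightarrow> I \<in> dense_ideals \<and> ring_ideal I \<and> (\<forall>g x. x \<in> I \<longrightarrow> act g x \<in> I)"
  unfolding EH_def dense_ideals_def by blast

lemma partB:
  assumes I: "I \<in> EH act" "I \<subseteq> Dq iota q"
    and hyp: "\<forall>h. \<forall>a\<in>I. (\<forall>b. iota b = iota a * q \<longrightarrow> iota (act h b) = iota (act h a) * q)
                       \<and> (\<forall>b. iota b = q * iota a \<longrightarrow> iota (act h b) = q * iota (act h a))"
  shows "q \<in> QH act iota"
  unfolding QH_iff
proof (intro allI ballI conjI impI)
  have Id: "I \<in> dense_ideals" and Iid: "ring_ideal I" and Ist: "\<And>g x. x \<in> I \<Longrightarrow> act g x \<in> I"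
    using EH_D[OF I(1)] by blast+
  fix h d
  assume d: "d \<in> Dq iota q"
  {
    fix a assume a: "iota a = iota d * q"
    have "iota (act h a) - iota (act h d) * q = 0"
    proof (rule ann_left[OF Id])
      fix x assume x: "x \<in> I"
      have "iota x * iota (act h a) = iota (x * act h a)" by (simp add: i_mult)
      also have "\<dots> = sum_list (map (\<lambda>(u,w). iota (act w (act (inv S u) x * a))) (Delta h))"
        by (simp only: id2[OF bijS] i_sum_list split_def)
      also have "\<dots> = sum_list (map (\<lambda>(u,w). iota (act w (act (inv S u) x * d)) * q) (Delta h))"
      proof (rule arg_cong[where f=sum_list], rule map_cong[OF refl])
        fix p assume "p \<in> set (Delta h)"
        obtain u w where p: "p = (u,w)" by fastforce
        have ed: "act (inv S u) x * d \<in> I" using Ist[OF x] ideal_mult[OF Iid] by blast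
        have "iota (act (inv S u) x * a) = iota (act (inv S u) x * d) * q"
          by (simp add: i_mult a mult.assoc)
        then have "iota (act w (act (inv S u) x * a)) = iota (act w (act (inv S u) x * d)) * q"
          using hyp ed by blast
        then show "(\<lambda>(u,w). iota (act w (act (inv S u) x * a))) p = (\<lambda>(u,w). iota (act w (act (inv S u) x * d)) * q) p"
          using p by simp
      qed
      also have "\<dots> = iota (x * act h d) * q"
        by (simp only: id2[OF bijS, of x h d] i_sum_list sum_list_mult_const split_def)
      finally show "iota x * (iota (act h a) - iota (act h d) * q) = 0"
        by (simp add: right_diff_distrib mult.assoc i_mult)
    qed
    then show "iota (act h a) = iota (act h d) * q" by simp
  }
  {
    fix a assume a: "iota a = q * iota d"
    have "iota (act h a) - q * iota (act h d) = 0"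
    proof (rule ann_right[OF Id])
      fix x assume x: "x \<in> I"
      have "iota (act h a) * iota x = iota (act h a * x)" by (simp add: i_mult)
      also have "\<dots> = sum_list (map (\<lambda>(u,w). iota (act u (a * act (S w) x))) (Delta h))"
        by (simp only: id1 i_sum_list split_def)
      also have "\<dots> = sum_list (map (\<lambda>(u,w). q * iota (act u (d * act (S w) x))) (Delta h))"
      proof (rule arg_cong[where f=sum_list], rule map_cong[OF refl])
        fix p assume "p \<in> set (Delta h)"
        obtain u w where p: "p = (u,w)" by fastforce
        have ed: "d * act (S w) x \<in> I" using Ist[OF x] ideal_mult[OF Iid] by blast
        have "iota (a * act (S w) x) = q * iota (d * act (S w) x)"
          by (simp add: i_mult a mult.assoc)
        then have "iota (act u (a * act (S w) x)) = q * iota (act u (d * act (S w) x))"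
          using hyp ed by blast
        then show "(\<lambda>(u,w). iota (act u (a * act (S w) x))) p = (\<lambda>(u,w). q * iota (act u (d * act (S w) x))) p"
          using p by simp
      qed
      also have "\<dots> = q * iota (act h d * x)"
        by (simp only: id1[of h d x] i_sum_list sum_list_const_mult split_def)
      finally show "(iota (act h a) - q * iota (act h d)) * iota x = 0"
        by (simp add: left_diff_distrib mult.assoc i_mult)
    qed
    then show "iota (act h a) = q * iota (act h d)" by simp
  }
qed


lemma rng_add: "u \<in> range iota \<Longrightarrow> v \<in> range iota \<Longrightarrow> u + v \<in> range iota"
proof -
  assume "u \<in> range iota" "v \<in> range iota"
  then obtain u' v' where "u = iota u'" "v = iota v'" by blast
  then have "u + v = iota (u' + v')" by (simp add: i_add)
  then show ?thesis by blast
qed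

lemma inv_r: "a0 \<in> invariants act eps sA \<Longrightarrow> act h (d * a0) = act h d * a0"
proof -
  assume "a0 \<in> invariants act eps sA"
  then have inv0: "\<And>g. act g a0 = sA (eps g) a0" unfolding invariants_def by blast
  have "act h (d * a0) = sum_list (map (\<lambda>(u,w). sA (eps w) (act u d) * a0) (Delta h))"
    by (simp add: act_prod inv0 A.sc_ml A.sc_mr split_def)
  also have "\<dots> = act (sum_list (map (\<lambda>(u,w). sH (eps w) u) (Delta h))) d * a0"
    by (simp add: sum_list_mult_const act_sum_list_left act_scale_left split_def)
  finally show ?thesis by (simp add: counit_right)
qed

lemma inv_l: "a0 \<in> invariants act eps sA \<Longrightarrow> act h (a0 * d) = a0 * act h d"
proof -
  assume "a0 \<in> invariants act eps sA"
  then have inv0: "\<And>g. act g a0 = sA (eps g) a0" unfolding invariants_def by blast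
  have "act h (a0 * d) = sum_list (map (\<lambda>(u,w). a0 * sA (eps u) (act w d)) (Delta h))"
    by (simp add: act_prod inv0 A.sc_ml A.sc_mr split_def)
  also have "\<dots> = a0 * act (sum_list (map (\<lambda>(u,w). sH (eps u) w) (Delta h))) d"
    by (simp add: sum_list_const_mult act_sum_list_left act_scale_left split_def)
  finally show ?thesis by (simp add: counit_left)
qed

lemma inv_QH: "a0 \<in> invariants act eps sA \<Longrightarrow> iota a0 \<in> QH act iota"
  unfolding QH_iff
proof (intro allI ballI conjI impI)
  fix h d a assume a0: "a0 \<in> invariants act eps sA"
  {
    assume "iota a = iota d * iota a0"
    then have "a = d * a0" by (simp add: i_mult[symmetric] i_inj)
    then show "iota (act h a) = iota (act h d) * iota a0" by (simp add: inv_r[OF a0] i_mult)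
  }
  {
    assume "iota a = iota a0 * iota d"
    then have "a = a0 * d" by (simp add: i_mult[symmetric] i_inj)
    then show "iota (act h a) = iota a0 * iota (act h d)" by (simp add: inv_l[OF a0] i_mult)
  }
qed

lemma dense_inter:
  assumes I: "I \<in> dense_ideals" and J: "J \<in> dense_ideals"
  shows "I \<inter> J \<in> dense_ideals"
proof -
  have iI: "ring_ideal I" and iJ: "ring_ideal J" using I J unfolding dense_ideals_def by blast+
  have iIJ: "ring_ideal (I \<inter> J)" using iI iJ unfolding ring_ideal_def by blast
  have l: "a = 0" if h: "\<forall>x\<in>I \<inter> J. a * x = 0" for a
  proof -
    have "a * y = 0" if y: "y \<in> I" for y
    proof -
      have "\<forall>z\<in>J. (a * y) * z = 0"
        using h ideal_mult[OF iI y] ideal_mult[OF iJ] by (simp add: mult.assoc)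
      then show ?thesis using J unfolding dense_ideals_def by blast
    qed
    then show ?thesis using I unfolding dense_ideals_def by blast
  qed
  have r: "a = 0" if h: "\<forall>x\<in>I \<inter> J. x * a = 0" for a
  proof -
    have "z * a = 0" if z: "z \<in> J" for z
    proof -
      have "\<forall>y\<in>I. y * (z * a) = 0"
        using h ideal_mult[OF iI] ideal_mult[OF iJ z] by (simp add: mult.assoc[symmetric])
      then show ?thesis using I unfolding dense_ideals_def by blast
    qed
    then show ?thesis using J unfolding dense_ideals_def by blast
  qed
  show ?thesis unfolding dense_ideals_def using iIJ l r by blast
qed

lemma QH_add:
  assumes p: "p \<in> QH act iota" and q: "q \<in> QH act iota"
  shows "p + q \<in> QH act iota"
proof (rule partB[where I="Dq iota p \<inter> Dq iota q"])
  have Ep: "Dq iota p \<in> EH act" and Eq: "Dq iota q \<in> EH act" using partA p q by blast+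
  have "ring_ideal (Dq iota p \<inter> Dq iota q)" using Dq_ideal[of p] Dq_ideal[of q] unfolding ring_ideal_def by blast
  then show "Dq iota p \<inter> Dq iota q \<in> EH act"
    using dense_inter[OF Dq_dense Dq_dense] Dq_stable[OF p] Dq_stable[OF q] unfolding EH_def by blast
  show "Dq iota p \<inter> Dq iota q \<subseteq> Dq iota (p + q)"
  proof
    fix x assume x: "x \<in> Dq iota p \<inter> Dq iota q"
    show "x \<in> Dq iota (p + q)" unfolding Dq_iff
    proof
      fix b
      have "p * iota b * iota x \<in> range iota" "q * iota b * iota x \<in> range iota"
        "iota x * iota b * p \<in> range iota" "iota x * iota b * q \<in> range iota"
        using IntD1[OF x] IntD2[OF x] unfolding Dq_iff by blast+
      then show "(p + q) * iota b * iota x \<in> range iota \<and> iota x * iota b * (p + q) \<in> range iota"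
        by (simp add: distrib_left distrib_right rng_add)
    qed
  qed
  show "\<forall>h. \<forall>a\<in>Dq iota p \<inter> Dq iota q. (\<forall>b. iota b = iota a * (p + q) \<longrightarrow> iota (act h b) = iota (act h a) * (p + q))
     \<and> (\<forall>b. iota b = (p + q) * iota a \<longrightarrow> iota (act h b) = (p + q) * iota (act h a))"
  proof (intro allI ballI conjI impI)
    fix h a b assume a: "a \<in> Dq iota p \<inter> Dq iota q"
    {
      assume b: "iota b = iota a * (p + q)"
      obtain b1 where b1: "iota b1 = iota a * p" using Dq_right[of a p] a by (metis IntE rangeE)
      obtain b2 where b2: "iota b2 = iota a * q" using Dq_right[of a q] a by (metis IntE rangeE)
      have "b = b1 + b2" using b b1 b2 by (simp add: i_inj[symmetric] i_add distrib_left)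
      moreover have "iota (act h b1) = iota (act h a) * p" using p a b1 unfolding QH_iff by blast
      moreover have "iota (act h b2) = iota (act h a) * q" using q a b2 unfolding QH_iff by blast
      ultimately show "iota (act h b) = iota (act h a) * (p + q)"
        by (simp add: act_add_right i_add distrib_left)
    }
    {
      assume b: "iota b = (p + q) * iota a"
      obtain b1 where b1: "iota b1 = p * iota a" using Dq_left[of a p] a by (metis IntE rangeE)
      obtain b2 where b2: "iota b2 = q * iota a" using Dq_left[of a q] a by (metis IntE rangeE)
      have "b = b1 + b2" using b b1 b2 by (simp add: i_inj[symmetric] i_add distrib_right)
      moreover have "iota (act h b1) = p * iota (act h a)" using p a b1 unfolding QH_iff by blast
      moreover have "iota (act h b2) = q * iota (act h a)" using q a b2 unfolding QH_iff by blast
      ultimately show "iota (act h b) = (p + q) * iota (act h a)"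
        by (simp add: act_add_right i_add distrib_right)
    }
  qed
qed


lemma Dq_memL: "x \<in> Dq iota q \<Longrightarrow> \<exists>c. iota c = q * iota b * iota x"
  unfolding Dq_iff by (metis rangeE)
lemma Dq_memR: "x \<in> Dq iota q \<Longrightarrow> \<exists>c. iota c = iota x * iota b * q"
  unfolding Dq_iff by (metis rangeE)

lemma QH_mult:
  assumes p: "p \<in> QH act iota" and q: "q \<in> QH act iota"
  shows "p * q \<in> QH act iota"
proof -
  define J where "J = {x. x \<in> Dq iota p \<and> x \<in> Dq iota q
      \<and> (\<forall>b c. iota c = q * iota b * iota x \<longrightarrow> c \<in> Dq iota p)
      \<and> (\<forall>b c. iota c = iota x * iota b * p \<longrightarrow> c \<in> Dq iota q)}"
  have Jp: "x \<in> Dq iota p" and Jq: "x \<in> Dq iota q"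
    and JL: "\<And>b c. iota c = q * iota b * iota x \<Longrightarrow> c \<in> Dq iota p"
    and JR: "\<And>b c. iota c = iota x * iota b * p \<Longrightarrow> c \<in> Dq iota q" if "x \<in> J" for x
    using that unfolding J_def by blast+
  have JI: "x \<in> J" if "x \<in> Dq iota p" "x \<in> Dq iota q"
      "\<And>b c. iota c = q * iota b * iota x \<Longrightarrow> c \<in> Dq iota p"
      "\<And>b c. iota c = iota x * iota b * p \<Longrightarrow> c \<in> Dq iota q" for x
    using that unfolding J_def by blast
  note idp = Dq_ideal[of p, unfolded ring_ideal_def] and idq = Dq_ideal[of q, unfolded ring_ideal_def]
  have Jideal: "ring_ideal J"
    unfolding ring_ideal_def
  proof (intro conjI ballI allI)
    show "0 \<in> J"
    proof (rule JI)
      show "0 \<in> Dq iota p" "0 \<in> Dq iota q" using idp idq by blast+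
      fix b c
      show "iota c = q * iota b * iota 0 \<Longrightarrow> c \<in> Dq iota p" using idp by (simp add: i_zero i_inj[of c 0, unfolded i_zero])
      show "iota c = iota 0 * iota b * p \<Longrightarrow> c \<in> Dq iota q" using idq by (simp add: i_zero i_inj[of c 0, unfolded i_zero])
    qed
  next
    fix x y assume x: "x \<in> J" and y: "y \<in> J"
    show "x + y \<in> J"
    proof (rule JI)
      show "x + y \<in> Dq iota p" "x + y \<in> Dq iota q" using idp idq Jp[OF x] Jp[OF y] Jq[OF x] Jq[OF y] by blast+
      fix b c
      {
        assume c: "iota c = q * iota b * iota (x + y)"
        obtain c1 c2 where c1: "iota c1 = q * iota b * iota x" and c2: "iota c2 = q * iota b * iota y"
          using Dq_memL[OF Jq[OF x]] Dq_memL[OF Jq[OF y]] by blast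
        have "c = c1 + c2" using c c1 c2 by (simp add: i_inj[symmetric] i_add distrib_left)
        then show "c \<in> Dq iota p" using JL[OF x c1] JL[OF y c2] idp by blast
      }
      {
        assume c: "iota c = iota (x + y) * iota b * p"
        obtain c1 c2 where c1: "iota c1 = iota x * iota b * p" and c2: "iota c2 = iota y * iota b * p"
          using Dq_memR[OF Jp[OF x]] Dq_memR[OF Jp[OF y]] by blast
        have "c = c1 + c2" using c c1 c2 by (simp add: i_inj[symmetric] i_add distrib_right)
        then show "c \<in> Dq iota q" using JR[OF x c1] JR[OF y c2] idq by blast
      }
    qed
  next
    fix x assume x: "x \<in> J"
    show "- x \<in> J"
    proof (rule JI)
      show "- x \<in> Dq iota p" "- x \<in> Dq iota q" using idp idq Jp[OF x] Jq[OF x] by blast+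
      fix b c
      {
        assume c: "iota c = q * iota b * iota (- x)"
        obtain c1 where c1: "iota c1 = q * iota b * iota x"
          using Dq_memL[OF Jq[OF x]] by blast
        have "c = - c1" using c c1 by (simp add: i_inj[symmetric] i_neg)
        then show "c \<in> Dq iota p" using JL[OF x c1] idp by blast
      }
      {
        assume c: "iota c = iota (- x) * iota b * p"
        obtain c1 where c1: "iota c1 = iota x * iota b * p"
          using Dq_memR[OF Jp[OF x]] by blast
        have "c = - c1" using c c1 by (simp add: i_inj[symmetric] i_neg)
        then show "c \<in> Dq iota q" using JR[OF x c1] idq by blast
      }
    qed
  next
    fix x a assume x: "x \<in> J"
    show "a * x \<in> J"
    proof (rule JI)
      show "a * x \<in> Dq iota p" "a * x \<in> Dq iota q" using idp idq Jp[OF x] Jq[OF x] by blast+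
      fix b c
      {
        assume c: "iota c = q * iota b * iota (a * x)"
        then have "iota c = q * iota (b * a) * iota x" by (simp add: i_mult mult.assoc)
        then show "c \<in> Dq iota p" using JL[OF x] by blast
      }
      {
        assume c: "iota c = iota (a * x) * iota b * p"
        obtain c1 where c1: "iota c1 = iota x * iota b * p"
          using Dq_memR[OF Jp[OF x]] by blast
        have "c = a * c1" using c c1 by (simp add: i_inj[symmetric] i_mult mult.assoc)
        then show "c \<in> Dq iota q" using JR[OF x c1] idq by blast
      }
    qed
    show "x * a \<in> J"
    proof (rule JI)
      show "x * a \<in> Dq iota p" "x * a \<in> Dq iota q" using idp idq Jp[OF x] Jq[OF x] by blast+
      fix b c
      {
        assume c: "iota c = q * iota b * iota (x * a)"
        obtain c1 where c1: "iota c1 = q * iota b * iota x"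
          using Dq_memL[OF Jq[OF x]] by blast
        have "c = c1 * a" using c c1 by (simp add: i_inj[symmetric] i_mult mult.assoc)
        then show "c \<in> Dq iota p" using JL[OF x c1] idp by blast
      }
      {
        assume c: "iota c = iota (x * a) * iota b * p"
        then have "iota c = iota x * iota (a * b) * p" by (simp add: i_mult mult.assoc)
        then show "c \<in> Dq iota q" using JR[OF x] by blast
      }
    qed
  qed
  have prodJ: "e * d \<in> J" if e: "e \<in> Dq iota q" and d: "d \<in> Dq iota p" for e d
  proof (rule JI)
    show "e * d \<in> Dq iota p" "e * d \<in> Dq iota q" using idp idq e d by blast+
    fix b c
    {
      assume c: "iota c = q * iota b * iota (e * d)"
      obtain c1 where c1: "iota c1 = q * iota b * iota e" using Dq_memL[OF e] by blast
      have "c = c1 * d" using c c1 by (simp add: i_inj[symmetric] i_mult mult.assoc)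
      then show "c \<in> Dq iota p" using d idp by blast
    }
    {
      assume c: "iota c = iota (e * d) * iota b * p"
      obtain c1 where c1: "iota c1 = iota d * iota b * p" using Dq_memR[OF d] by blast
      have "c = e * c1" using c c1 by (simp add: i_inj[symmetric] i_mult mult.assoc)
      then show "c \<in> Dq iota q" using e idq by blast
    }
  qed
  have Dp_d: "Dq iota p \<in> dense_ideals" and Dq_d: "Dq iota q \<in> dense_ideals" using Dq_dense by blast+
  have Jdense: "J \<in> dense_ideals"
    unfolding dense_ideals_def
  proof (intro CollectI conjI allI impI)
    show "ring_ideal J" by (rule Jideal)
  next
    fix a assume h: "\<forall>x\<in>J. a * x = 0"
    have "a * e = 0" if e: "e \<in> Dq iota q" for e
    proof -
      have "\<forall>d\<in>Dq iota p. (a * e) * d = 0" using h prodJ[OF e] by (simp add: mult.assoc)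
      then show ?thesis using Dp_d unfolding dense_ideals_def by blast
    qed
    then show "a = 0" using Dq_d unfolding dense_ideals_def by blast
  next
    fix a assume h: "\<forall>x\<in>J. x * a = 0"
    have "d * a = 0" if d: "d \<in> Dq iota p" for d
    proof -
      have "\<forall>e\<in>Dq iota q. e * (d * a) = 0" using h prodJ[OF _ d] by (simp add: mult.assoc[symmetric])
      then show ?thesis using Dq_d unfolding dense_ideals_def by blast
    qed
    then show "a = 0" using Dp_d unfolding dense_ideals_def by blast
  qed
  have Jstable: "act h x \<in> J" if x: "x \<in> J" for h x
  proof (rule JI)
    show "act h x \<in> Dq iota p" "act h x \<in> Dq iota q" using Dq_stable[OF p Jp[OF x]] Dq_stable[OF q Jq[OF x]] by blast+
    fix b c
    {
      assume c: "iota c = q * iota b * iota (act h x)"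
      define c0 where "c0 u = inv iota (q * iota (act (inv S u) b) * iota x)" for u
      have c0: "iota (c0 u) = q * iota (act (inv S u) b) * iota x" for u
        unfolding c0_def by (rule i_inv) (use Jq[OF x] in \<open>simp add: Dq_iff\<close>)
      have c0p: "c0 u \<in> Dq iota p" for u using JL[OF x c0] .
      have e: "act (inv S u) b * x \<in> Dq iota q" for u using idq Jq[OF x] by blast
      have c0q: "iota (act w (c0 u)) = q * iota (act w (act (inv S u) b * x))" for u w
        using q e c0[of u] unfolding QH_iff by (simp add: i_mult mult.assoc)
      have "iota c = q * iota (b * act h x)" using c by (simp add: i_mult mult.assoc)
      also have "\<dots> = sum_list (map (\<lambda>(u,w). q * iota (act w (act (inv S u) b * x))) (Delta h))"
        by (simp only: id2[OF bijS, of b h x] i_sum_list sum_list_const_mult split_def)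
      also have "\<dots> = iota (sum_list (map (\<lambda>(u,w). act w (c0 u)) (Delta h)))"
        by (simp only: c0q[symmetric] i_sum_list split_def)
      finally have "c = sum_list (map (\<lambda>(u,w). act w (c0 u)) (Delta h))" by (simp add: i_inj)
      then show "c \<in> Dq iota p"
        using ideal_sum_list[OF Dq_ideal[of p], of "Delta h" "\<lambda>(u,w). act w (c0 u)"] Dq_stable[OF p c0p]
        by (simp add: split_def)
    }
    {
      assume c: "iota c = iota (act h x) * iota b * p"
      define c0 where "c0 w = inv iota (iota x * iota (act (S w) b) * p)" for w
      have c0: "iota (c0 w) = iota x * iota (act (S w) b) * p" for w
        unfolding c0_def by (rule i_inv) (use Jp[OF x] in \<open>simp add: Dq_iff\<close>)
      have c0p: "c0 w \<in> Dq iota q" for w using JR[OF x c0] .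
      have e: "x * act (S w) b \<in> Dq iota p" for w using idp Jp[OF x] by blast
      have c0q: "iota (act u (c0 w)) = iota (act u (x * act (S w) b)) * p" for u w
        using p e c0[of w] unfolding QH_iff by (simp add: i_mult mult.assoc)
      have "iota c = iota (act h x * b) * p" using c by (simp add: i_mult mult.assoc)
      also have "\<dots> = sum_list (map (\<lambda>(u,w). iota (act u (x * act (S w) b)) * p) (Delta h))"
        by (simp only: id1[of h x b] i_sum_list sum_list_mult_const split_def)
      also have "\<dots> = iota (sum_list (map (\<lambda>(u,w). act u (c0 w)) (Delta h)))"
        by (simp only: c0q[symmetric] i_sum_list split_def)
      finally have "c = sum_list (map (\<lambda>(u,w). act u (c0 w)) (Delta h))" by (simp add: i_inj)
      then show "c \<in> Dq iota q"
        using ideal_sum_list[OF Dq_ideal[of q], of "Delta h" "\<lambda>(u,w). act u (c0 w)"] Dq_stable[OF q c0p]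
        by (simp add: split_def)
    }
  qed
  show ?thesis
  proof (rule partB[where I=J])
    show "J \<in> EH act" unfolding EH_def using Jdense Jstable by blast
    show "J \<subseteq> Dq iota (p * q)"
    proof
      fix x assume x: "x \<in> J"
      show "x \<in> Dq iota (p * q)" unfolding Dq_iff
      proof
        fix b
        obtain c1 where c1: "iota c1 = q * iota b * iota x" using Dq_memL[OF Jq[OF x]] by blast
        obtain c2 where c2: "iota c2 = iota x * iota b * p" using Dq_memR[OF Jp[OF x]] by blast
        have "p * q * iota b * iota x = p * iota c1" using c1 by (simp add: mult.assoc)
        moreover have "iota x * iota b * (p * q) = iota c2 * q" using c2 by (simp add: mult.assoc)
        ultimately show "p * q * iota b * iota x \<in> range iota \<and> iota x * iota b * (p * q) \<in> range iota"
          using Dq_left[OF JL[OF x c1]] Dq_right[OF JR[OF x c2]] by simp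
      qed
    qed
    show "\<forall>h. \<forall>a\<in>J. (\<forall>b. iota b = iota a * (p * q) \<longrightarrow> iota (act h b) = iota (act h a) * (p * q))
       \<and> (\<forall>b. iota b = p * q * iota a \<longrightarrow> iota (act h b) = p * q * iota (act h a))"
    proof (intro allI ballI conjI impI)
      fix h a b assume a: "a \<in> J"
      {
        assume b: "iota b = iota a * (p * q)"
        obtain c where c: "iota c = iota a * iota 1 * p" using Dq_memR[OF Jp[OF a]] by blast
        have cq: "c \<in> Dq iota q" using JR[OF a c] .
        have c': "iota c = iota a * p" using c by (simp add: i_one)
        have "iota (act h c) = iota (act h a) * p" using p Jp[OF a] c' unfolding QH_iff by blast
        moreover have "iota b = iota c * q" using b c' by (simp add: mult.assoc)
        then have "iota (act h b) = iota (act h c) * q" using q cq unfolding QH_iff by blast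
        ultimately show "iota (act h b) = iota (act h a) * (p * q)" by (simp add: mult.assoc)
      }
      {
        assume b: "iota b = p * q * iota a"
        obtain c where c: "iota c = q * iota 1 * iota a" using Dq_memL[OF Jq[OF a]] by blast
        have cp: "c \<in> Dq iota p" using JL[OF a c] .
        have c': "iota c = q * iota a" using c by (simp add: i_one)
        have "iota (act h c) = q * iota (act h a)" using q Jq[OF a] c' unfolding QH_iff by blast
        moreover have "iota b = p * iota c" using b c' by (simp add: mult.assoc)
        then have "iota (act h b) = p * iota (act h c)" using p cp unfolding QH_iff by blast
        ultimately show "iota (act h b) = p * q * iota (act h a)" by (simp add: mult.assoc)
      }
    qed
  qed
qed


lemma partC: "subalgebra_Q sA iota (QH act iota)"
  unfolding subalgebra_Q_def
proof (intro conjI ballI allI)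
  have "0 \<in> invariants act eps sA" unfolding invariants_def by (simp add: act_zero_right)
  then show "0 \<in> QH act iota" using inv_QH i_zero by metis
  have "1 \<in> invariants act eps sA" unfolding invariants_def by (simp add: act_unit)
  then show "1 \<in> QH act iota" using inv_QH i_one by metis
  fix x y assume x: "x \<in> QH act iota" and y: "y \<in> QH act iota"
  show "x + y \<in> QH act iota" using QH_add[OF x y] .
  show "x * y \<in> QH act iota" using QH_mult[OF x y] .
next
  fix x assume x: "x \<in> QH act iota"
  have "- 1 \<in> invariants act eps sA" unfolding invariants_def
    by (simp add: act_neg_right act_unit A.scale_minus_right)
  then have "iota (- 1) \<in> QH act iota" by (rule inv_QH)
  then have "iota (- 1) * x \<in> QH act iota" using QH_mult[OF _ x] by blast
  then show "- x \<in> QH act iota" by (simp add: i_neg i_one)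
next
  fix c x assume x: "x \<in> QH act iota"
  have "sA c 1 \<in> invariants act eps sA" unfolding invariants_def
    by (simp add: act_scale_right act_unit A.scale_scale mult.commute)
  then have "iota (sA c 1) \<in> QH act iota" by (rule inv_QH)
  then show "iota (sA c 1) * x \<in> QH act iota" using QH_mult[OF _ x] by blast
qed

lemma partD: "iota ` invariants act eps sA \<subseteq> QH act iota"
  using inv_QH by blast

end

theorem lemma2p1:
  fixes sH :: "'k::field \<Rightarrow> 'h::ring_1 \<Rightarrow> 'h"
    and Delta :: "'h \<Rightarrow> ('h \<times> 'h) list" and eps :: "'h \<Rightarrow> 'k" and S :: "'h \<Rightarrow> 'h"
    and sA :: "'k \<Rightarrow> 'a::ring_1 \<Rightarrow> 'a" and act :: "'h \<Rightarrow> 'a \<Rightarrow> 'a"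
    and iota :: "'a \<Rightarrow> 'q::ring_1"
  assumes "H_module_algebra sH Delta eps S sA act"
    and "bij S"
    and "sym_martindale iota"
  shows "(\<forall>q\<in>QH act iota. Dq iota q \<in> EH act)
    \<and> (\<forall>q I. I \<in> EH act \<and> I \<subseteq> Dq iota q
          \<and> (\<forall>h. \<forall>a\<in>I. (\<forall>b. iota b = iota a * q \<longrightarrow> iota (act h b) = iota (act h a) * q)
                       \<and> (\<forall>b. iota b = q * iota a \<longrightarrow> iota (act h b) = q * iota (act h a)))
          \<longrightarrow> q \<in> QH act iota)
    \<and> subalgebra_Q sA iota (QH act iota)
    \<and> iota ` invariants act eps sA \<subseteq> QH act iota"
proof -
  have "LS sH Delta eps S sA act iota"
    unfolding LS_def LS_axioms_def using assms by blast
  then interpret L: LS sH Delta eps S sA act iota .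
  show ?thesis using L.partA L.partB L.partC L.partD by blast
qed

end
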